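(* Let $k\ge3$ and $P_k=I+\frac16U_k$. Then all eigenvalues of $P_k$ are real. Ordering them as $\lambda_k\le\lambda_{k-1}\le\cdots\le\lambda_2\le\lambda_1$, we have $\lambda_1=1$ and $$\max(|\lambda_k|,|\lambda_2|)\le 1-\frac{1}{3k^2}.$$
   Context: The matrices $U_k$ ($k\ge3$) are: $U_3=\begin{pmatrix}-4&4&0\\2&-4&2\\0&4&-4\end{pmatrix}$; for $k\ge4$, $U_k$ is the $k\times k$ tridiagonal matrix with first row $(-4,4,0,\dots,0)$, second row $(2,-5,3,0,\dots,0)$, rows $3,\dots,k-2$ having entries $3,-6,3$ on the sub-, main and super-diagonal, row $k-1$ equal to $(0,\dots,0,3,-5,2)$, and last row $(0,\dots,0,4,-4)$. (So $U_4=\begin{pmatrix}-4&4&0&0\\2&-5&3&0\\0&3&-5&2\\0&0&4&-4\end{pmatrix}$.) $I$ denotes the $k\times k$ identity matrix. *)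

theory Defs
  imports "Jordan_Normal_Form.Char_Poly" "HOL.Complex"
begin

(* U_k as a k x k real matrix, 0-indexed rows/columns i,j < k *)
definition U_entry :: "nat \<Rightarrow> nat \<Rightarrow> nat \<Rightarrow> real" where
  "U_entry k i j =
    (if k = 3 then
       (if i = 0 then (if j = 0 then -4 else if j = 1 then 4 else 0)
        else if i = 1 then (if j = 0 then 2 else if j = 1 then -4 else if j = 2 then 2 else 0)
        else (if j = 1 then 4 else if j = 2 then -4 else 0))
     else
       (if i = 0 then (if j = 0 then -4 else if j = 1 then 4 else 0)
        else if i = 1 then (if j = 0 then 2 else if j = 1 then -5 else if j = 2 then 3 else 0)
        else if i = k - 1 then (if j = k - 2 then 4 else if j = k - 1 then -4 else 0)
        else if i = k - 2 then (if j = k - 3 then 3 else if j = k - 2 then -5 else if j = k - 1 then 2 else 0)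
        else (if j + 1 = i then 3 else if j = i then -6 else if j = i + 1 then 3 else 0)))"

definition U :: "nat \<Rightarrow> real mat" where
  "U k = mat k k (\<lambda>(i, j). U_entry k i j)"

definition P :: "nat \<Rightarrow> real mat" where
  "P k = 1\<^sub>m k + (1/6) \<cdot>\<^sub>m U k"

end

theory Submission imports Defs Complex_Main begin

definition Pe :: "nat \<Rightarrow> nat \<Rightarrow> nat \<Rightarrow> real" where
  "Pe k i j = (if i = j then 1 else 0) + U_entry k i j / 6"

lemma P_mult: "i < k \<Longrightarrow> (P k *\<^sub>v vec k f) $ i = (\<Sum>j<k. Pe k i j * f j)"
  unfolding P_def U_def Pe_def
  by (auto simp: scalar_prod_def row_def atLeast0LessThan intro!: sum.cong)


lemma row0: "k \<ge> 4 \<Longrightarrow> (\<Sum>j<k. Pe k 0 j * f j) = 1/3 * f 0 + 2/3 * f 1"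
proof -
  assume k: "k \<ge> 4"
  have "(\<Sum>j<k. Pe k 0 j * f j) = (\<Sum>j\<in>{0,1}. Pe k 0 j * f j)"
    by (rule sum.mono_neutral_right) (use k in \<open>auto simp: Pe_def U_entry_def\<close>)
  then show ?thesis using k by (simp add: Pe_def U_entry_def)
qed

lemma row1: "k \<ge> 4 \<Longrightarrow> (\<Sum>j<k. Pe k 1 j * f j) = 1/3 * f 0 + 1/6 * f 1 + 1/2 * f 2"
proof -
  assume k: "k \<ge> 4"
  have "(\<Sum>j<k. Pe k 1 j * f j) = (\<Sum>j\<in>{0,1,2}. Pe k 1 j * f j)"
    by (rule sum.mono_neutral_right) (use k in \<open>auto simp: Pe_def U_entry_def\<close>)
  then show ?thesis using k by (simp add: Pe_def U_entry_def)
qed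

lemma rowi: "k \<ge> 4 \<Longrightarrow> 2 \<le> i \<Longrightarrow> i + 3 \<le> k \<Longrightarrow>
   (\<Sum>j<k. Pe k i j * f j) = 1/2 * f (i-1) + 1/2 * f (i+1)"
proof -
  assume k: "k \<ge> 4" "2 \<le> i" "i + 3 \<le> k"
  then obtain a where a: "i = a + 2" by (metis add.commute le_Suc_ex)
  define b where "b = k - (a+5)"
  have b: "k = a + 5 + b" using k a unfolding b_def by simp
  have "(\<Sum>j<k. Pe k i j * f j) = (\<Sum>j\<in>{a+1,a+2,a+3}. Pe k i j * f j)"
    by (rule sum.mono_neutral_right) (use a b in \<open>auto simp: Pe_def U_entry_def\<close>)
  also have "\<dots> = Pe k i (a+1) * f (a+1) + Pe k i (a+2) * f (a+2) + Pe k i (a+3) * f (a+3)"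
    by simp
  also have "Pe k i (a+1) = 1/2" using a b by (simp add: Pe_def U_entry_def)
  also have "Pe k i (a+2) = 0" using a b by (simp add: Pe_def U_entry_def)
  also have "Pe k i (a+3) = 1/2" using a b by (simp add: Pe_def U_entry_def)
  finally show ?thesis using a by (simp add: numeral_eq_Suc)
qed

lemma rowkm2: "k \<ge> 4 \<Longrightarrow>
   (\<Sum>j<k. Pe k (k-2) j * f j) = 1/2 * f (k-3) + 1/6 * f (k-2) + 1/3 * f (k-1)"
proof -
  assume k: "k \<ge> 4"
  then obtain m where m: "k = m + 4" by (metis add.commute le_Suc_ex)
  have "(\<Sum>j<k. Pe k (k-2) j * f j) = (\<Sum>j\<in>{m+1,m+2,m+3}. Pe k (k-2) j * f j)"
    by (rule sum.mono_neutral_right) (use m in \<open>auto simp: Pe_def U_entry_def\<close>)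
  also have "\<dots> = Pe k (k-2) (m+1) * f (m+1) + Pe k (k-2) (m+2) * f (m+2) + Pe k (k-2) (m+3) * f (m+3)"
    by simp
  also have "Pe k (k-2) (m+1) = 1/2" using m by (simp add: Pe_def U_entry_def)
  also have "Pe k (k-2) (m+2) = 1/6" using m by (simp add: Pe_def U_entry_def)
  also have "Pe k (k-2) (m+3) = 1/3" using m by (simp add: Pe_def U_entry_def)
  finally show ?thesis using m by (simp add: numeral_eq_Suc)
qed

lemma rowkm1: "k \<ge> 4 \<Longrightarrow>
   (\<Sum>j<k. Pe k (k-1) j * f j) = 2/3 * f (k-2) + 1/3 * f (k-1)"
proof -
  assume k: "k \<ge> 4"
  then obtain m where m: "k = m + 4" by (metis add.commute le_Suc_ex)
  have "(\<Sum>j<k. Pe k (k-1) j * f j) = (\<Sum>j\<in>{m+2,m+3}. Pe k (k-1) j * f j)"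
    by (rule sum.mono_neutral_right) (use m in \<open>auto simp: Pe_def U_entry_def\<close>)
  also have "\<dots> = Pe k (k-1) (m+2) * f (m+2) + Pe k (k-1) (m+3) * f (m+3)"
    by simp
  also have "Pe k (k-1) (m+2) = 2/3" using m by (simp add: Pe_def U_entry_def)
  also have "Pe k (k-1) (m+3) = 1/3" using m by (simp add: Pe_def U_entry_def)
  finally show ?thesis using m by (simp add: numeral_eq_Suc)
qed


fun ss :: "real \<Rightarrow> nat \<Rightarrow> real" where
  "ss l 0 = (3*l-1)/2"
| "ss l (Suc 0) = (6*l^2-3*l-1)/2"
| "ss l (Suc (Suc j)) = 2*l*ss l (Suc j) - ss l j"

definition vv :: "nat \<Rightarrow> real \<Rightarrow> nat \<Rightarrow> real" where
  "vv k l i = (if i = 0 then 1 else if i < k - 1 then ss l (i - 1)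
     else (3*l - 1/2) * ss l (k-3) - 3/2 * ss l (k-4))"

definition rr :: "nat \<Rightarrow> real \<Rightarrow> real" where
  "rr k l = -(1/2)*((6*l^2-3*l-1)*ss l (k-3) - (3*l-1)*ss l (k-4))"

lemma eig_rr:
  assumes k: "k \<ge> 4" and r: "rr k l = 0"
  shows "eigenvalue (P k) l"
proof -
  obtain m where m: "k = m + 4" using k by (metis add.commute le_Suc_ex)
  let ?v = "vec k (vv k l)"
  have rows: "(\<Sum>j<k. Pe k i j * vv k l j) = l * vv k l i" if i: "i < k" for i
  proof -
    consider "i = 0" | "i = 1" | "2 \<le> i \<and> i + 3 \<le> k" | "i = k - 2" | "i = k - 1" using i k by linarith
    then show ?thesis
    proof cases
      case 1 then show ?thesis using k m by (simp add: row0 vv_def) (simp add: field_simps)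
    next
      case 2
      have "(\<Sum>j<k. Pe k i j * vv k l j) = 1/3 * vv k l 0 + 1/6 * vv k l 1 + 1/2 * vv k l 2"
        using row1[OF k] 2 by simp
      then show ?thesis using k m 2 by (simp add: vv_def numeral_eq_Suc) (simp add: field_simps power2_eq_square)
    next
      case 3
      then obtain a where a: "i = a + 2" by (metis add.commute le_Suc_ex)
      have "i + 1 < k - 1" "i - 1 < k - 1" using 3 by auto
      then show ?thesis using 3 k a by (simp add: rowi vv_def numeral_eq_Suc, simp add: field_simps)
    next
      case 4
      have "(\<Sum>j<k. Pe k i j * vv k l j) = 1/2 * vv k l (k-3) + 1/6 * vv k l (k-2) + 1/3 * vv k l (k-1)"
        using rowkm2[OF k] 4 by simp
      moreover have "vv k l (k-3) = ss l m" "vv k l (k-2) = ss l (m+1)" "vv k l (k-1) = (3*l - 1/2) * ss l (m+1) - 3/2 * ss l m"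
        "vv k l i = ss l (m+1)"
        using m 4 by (auto simp: vv_def)
      ultimately show ?thesis by (simp add: field_simps)
    next
      case 5
      have "(\<Sum>j<k. Pe k i j * vv k l j) = 2/3 * vv k l (k-2) + 1/3 * vv k l (k-1)"
        using rowkm1[OF k] 5 by simp
      moreover have "vv k l (k-2) = ss l (m+1)" "vv k l (k-1) = (3*l - 1/2) * ss l (m+1) - 3/2 * ss l m"
        "vv k l i = (3*l - 1/2) * ss l (m+1) - 3/2 * ss l m"
        using m 5 by (auto simp: vv_def)
      ultimately have S: "(\<Sum>j<k. Pe k i j * vv k l j) - l * vv k l i = 
          2/3 * ss l (m+1) + 1/3 * ((3*l - 1/2) * ss l (m+1) - 3/2 * ss l m) - l * ((3*l - 1/2) * ss l (m+1) - 3/2 * ss l m)"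
        by simp
      have "(6*l^2-3*l-1)*ss l (m+1) - (3*l-1)*ss l m = 0" using r m by (simp add: rr_def)
      moreover have "2/3 * ss l (m+1) + 1/3 * ((3*l - 1/2) * ss l (m+1) - 3/2 * ss l m) - l * ((3*l - 1/2) * ss l (m+1) - 3/2 * ss l m)
         = -(1/2)*((6*l^2-3*l-1)*ss l (m+1) - (3*l-1)*ss l m)"
        by (simp add: algebra_simps power2_eq_square)
      ultimately show ?thesis using S by simp
    qed
  qed
  have "eigenvector (P k) ?v l"
    unfolding eigenvector_def
  proof (intro conjI)
    show "?v \<in> carrier_vec (dim_row (P k))" by (simp add: P_def U_def)
    have "?v $ 0 \<noteq> 0\<^sub>v (dim_row (P k)) $ 0" using k by (simp add: P_def U_def vv_def)
    then show "?v \<noteq> 0\<^sub>v (dim_row (P k))" by metis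
    show "P k *\<^sub>v ?v = l \<cdot>\<^sub>v ?v"
      by (rule eq_vecI) (auto simp: P_mult rows, simp_all add: P_def U_def)
  qed
  then show ?thesis unfolding eigenvalue_def by blast
qed


lemma sin_rec: "sin (x + t) = 2 * cos t * sin x - sin (x - (t::real))"
  by (simp add: sin_add sin_diff)

lemma ss_trig:
  "2 * sin t * ss (cos t) j = (6*cos t^2 - 3*cos t - 1) * sin (real j * t) - (3*cos t - 1) * sin ((real j - 1) * t)"
proof (induction j rule: less_induct)
  case (less j)
  show ?case
  proof (cases j)
    case 0 then show ?thesis by (simp add: field_simps)
  next
    case (Suc n)
    show ?thesis
    proof (cases n)
      case 0 then show ?thesis using Suc by simp
    next
      case (Suc n')
      have j: "j = Suc (Suc n')" using Suc \<open>j = Suc n\<close> by simp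
      have IH1: "2 * sin t * ss (cos t) (Suc n') = (6*cos t^2 - 3*cos t - 1) * sin ((real n' + 1) * t) - (3*cos t - 1) * sin (real n' * t)"
        using less[of "Suc n'"] j by (simp add: algebra_simps)
      have IH0: "2 * sin t * ss (cos t) n' = (6*cos t^2 - 3*cos t - 1) * sin (real n' * t) - (3*cos t - 1) * sin ((real n' - 1) * t)"
        using less[of "n'"] j by simp
      have r1: "sin ((real n' + 2) * t) = 2 * cos t * sin ((real n' + 1) * t) - sin (real n' * t)"
        using sin_rec[of "(real n' + 1) * t" t] by (simp add: algebra_simps)
      have r0: "sin ((real n' + 1) * t) = 2 * cos t * sin (real n' * t) - sin ((real n' - 1) * t)"
        using sin_rec[of "real n' * t" t] by (simp add: algebra_simps)
      have "2 * sin t * ss (cos t) j = 2 * cos t * (2 * sin t * ss (cos t) (Suc n')) - 2 * sin t * ss (cos t) n'"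
        using j by (simp add: algebra_simps)
      also have "\<dots> = (6*cos t^2 - 3*cos t - 1) * sin ((real n' + 2) * t) - (3*cos t - 1) * sin ((real n' + 1) * t)"
        unfolding IH1 IH0 r1 r0 by (simp add: algebra_simps)
      finally show ?thesis using j by (simp add: algebra_simps)
    qed
  qed
qed

lemma rr_trig:
  assumes k: "k \<ge> 4"
  shows "4 * sin t * rr k (cos t) = (1 - cos t)/2 * (9*sin(real k*t) + 6*sin((real k - 2)*t) + sin((real k - 4)*t))"
proof -
  obtain m where m: "k = m + 4" using k by (metis add.commute le_Suc_ex)
  define x where "x = real m * t"
  define c where "c = cos t"
  define s where "s = sin t"
  have A: "2 * s * ss c (m+1) = (6*c^2 - 3*c - 1) * sin (x + t) - (3*c - 1) * sin x"
    using ss_trig[of t "m+1"] unfolding x_def c_def s_def by (simp add: algebra_simps)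
  have B: "2 * s * ss c m = (6*c^2 - 3*c - 1) * sin x - (3*c - 1) * sin (x - t)"
    using ss_trig[of t "m"] unfolding x_def c_def s_def by (simp add: algebra_simps)
  have L: "4 * s * rr k c = -((6*c^2-3*c-1) * (2 * s * ss c (m+1)) - (3*c-1)*(2 * s * ss c m))"
    using m by (simp add: rr_def algebra_simps)
  have e1: "real k * t = x + 4*t" "(real k - 2) * t = x + 2*t" "(real k - 4) * t = x"
    using m unfolding x_def by (simp_all add: algebra_simps)
  have s2: "sin (2*t) = 2*s*c" "cos (2*t) = 2*c^2 - 1" unfolding s_def c_def
    by (simp_all add: sin_double cos_double_cos)
  have f4: "4*t = 2*(2*t)" by simp
  have s4a: "sin (4*t) = 2 * sin(2*t) * cos(2*t)" "cos (4*t) = 2 * cos(2*t)^2 - 1"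
    unfolding f4 by (rule sin_double, rule cos_double_cos)
  have s4: "sin (4*t) = 4*s*c*(2*c^2-1)" "cos (4*t) = 2*(2*c^2-1)^2 - 1"
    unfolding s4a s2 by simp_all
  have sc: "s^2 + c^2 = 1" unfolding s_def c_def by simp
  have "4 * s * rr k c = (1 - c)/2 * (9*sin(x + 4*t) + 6*sin(x + 2*t) + sin x)"
    unfolding L A B sin_add sin_diff s4 s2 using sc
    by (simp add: s_def[symmetric] c_def[symmetric] field_simps) (simp add: power2_eq_square algebra_simps eval_nat_numeral)
  then show ?thesis using e1 unfolding s_def c_def by simp
qed


definition th :: "nat \<Rightarrow> nat \<Rightarrow> real" where
  "th k m = (2 * real m + 1) * pi / (2 * real k)"

lemma th_bounds: "m < k \<Longrightarrow> 0 < th k m \<and> th k m < pi"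
proof -
  assume mk: "m < k"
  have "2 * real m + 1 < 2 * real k" using mk by linarith
  then have "(2 * real m + 1) * pi < (2 * real k) * pi" by simp
  moreover have "0 < (2 * real m + 1) * pi" by (simp add: add_pos_nonneg)
  ultimately show ?thesis using mk unfolding th_def by (simp add: field_simps)
qed

lemma th_mono: "m < m' \<Longrightarrow> 0 < k \<Longrightarrow> th k m < th k m'"
  unfolding th_def by (simp add: divide_strict_right_mono)

lemma cos_th_mono: "m < m' \<Longrightarrow> m' < k \<Longrightarrow> cos (th k m') < cos (th k m)"
  by (rule cos_monotone_0_pi) (use th_bounds[of m k] th_bounds[of m' k] th_mono[of m m' k] in auto)

lemma rr_sign:
  assumes k: "k \<ge> 4" and mk: "m < k"
  shows "(-1)^m * rr k (cos (th k m)) > 0"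
proof -
  define t where "t = th k m"
  have t: "0 < t" "t < pi" using th_bounds[OF mk] unfolding t_def by auto
  have kt: "real k * t = real m * pi + pi/2" using k unfolding t_def th_def by (simp add: field_simps)
  have skt: "sin (real k * t) = (-1)^m" unfolding kt sin_add by simp
  have ckt: "cos (real k * t) = 0" unfolding kt cos_add by simp
  have e2: "(real k - 2) * t = real k * t - 2 * t" "(real k - 4) * t = real k * t - 4 * t"
    by (simp_all add: algebra_simps)
  define G where "G = 9 + 6 * cos (2*t) + cos (4*t)"
  have G: "G \<ge> 2" unfolding G_def using cos_ge_minus_one[of "2*t"] cos_ge_minus_one[of "4*t"] by linarith
  have F: "9*sin(real k*t) + 6*sin((real k - 2)*t) + sin((real k - 4)*t) = (-1)^m * G"
    unfolding e2 sin_diff skt ckt G_def by (simp add: algebra_simps)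
  have c1: "cos t < 1" using cos_monotone_0_pi[of 0 t] t by simp
  have s0: "sin t > 0" using sin_gt_zero t by auto
  have "4 * sin t * rr k (cos t) = (1 - cos t)/2 * ((-1)^m * G)"
    using rr_trig[OF k, of t] F by simp
  then have "4 * sin t * ((-1)^m * rr k (cos t)) = (1 - cos t)/2 * G"
    by (metis (no_types, lifting) mult.assoc mult.left_commute power_mult_distrib mult_1 neg_one_even_power even_add mult_minus1 power_one_right dbl_simps(1) left_minus_one_mult_self)
  moreover have "(1 - cos t)/2 * G > 0" using c1 G by simp
  ultimately have "4 * sin t * ((-1)^m * rr k (cos t)) > 0" by simp
  then show ?thesis using s0 unfolding t_def by (simp add: zero_less_mult_iff)
qed


lemma ss_cont: "isCont (\<lambda>l. ss l j) x"
proof (induction j rule: less_induct)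
  case (less j)
  show ?case
  proof (cases j)
    case 0 then show ?thesis by (simp add: continuous_intros)
  next
    case (Suc n)
    show ?thesis
    proof (cases n)
      case 0 then show ?thesis using Suc by (simp add: continuous_intros)
    next
      case (Suc n')
      have j: "j = Suc (Suc n')" using Suc \<open>j = Suc n\<close> by simp
      have "isCont (\<lambda>l. ss l (Suc n')) x" "isCont (\<lambda>l. ss l n') x" using less j by auto
      then show ?thesis using j by (simp add: continuous_intros)
    qed
  qed
qed

lemma rr_cont: "isCont (rr k) x"
  unfolding rr_def by (intro continuous_intros ss_cont)

lemma root_exists:
  assumes k: "k \<ge> 4" and mk: "m + 1 < k"
  shows "\<exists>x. cos (th k (m+1)) < x \<and> x < cos (th k m) \<and> rr k x = 0"
proof -
  define a where "a = cos (th k (m+1))"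
  define b where "b = cos (th k m)"
  have ab: "a < b" unfolding a_def b_def by (rule cos_th_mono) (use mk in auto)
  have fb: "(-1)^m * rr k b > 0" unfolding b_def by (rule rr_sign) (use k mk in auto)
  have "(-1)^(m+1) * rr k a > 0" unfolding a_def by (rule rr_sign) (use k mk in auto)
  then have fa: "(-1)^m * rr k a < 0" by simp
  have "\<exists>x. a \<le> x \<and> x \<le> b \<and> (\<lambda>x. (-1)^m * rr k x) x = 0"
    by (rule IVT) (use fa fb ab in \<open>auto intro!: continuous_intros rr_cont\<close>)
  then obtain x where x: "a \<le> x" "x \<le> b" "(-1)^m * rr k x = 0" by auto
  then have "x \<noteq> a" "x \<noteq> b" using fa fb by auto
  with x have "a < x" "x < b" "rr k x = 0" by auto
  then show ?thesis unfolding a_def b_def by blast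
qed

lemma cos_bound:
  assumes k: "k \<ge> 1"
  shows "cos (pi / (2 * real k)) \<le> 1 - 1 / (3 * real k ^ 2)"
proof -
  define y where "y = pi / (4 * real k)"
  have y0: "0 < y" using k unfolding y_def by simp
  have y1: "y < 1" using k pi_less_4 unfolding y_def by (simp add: field_simps)
  have yk: "y * real k = pi / 4" using k unfolding y_def by simp
  have sumeq: "(\<Sum>m<3. sin_coeff m * y ^ m) = y" by (simp add: sin_coeff_def eval_nat_numeral)
  have "\<bar>sin y - y\<bar> \<le> inverse (fact 3) * \<bar>y\<bar> ^ 3"
    using Maclaurin_sin_bound[of y 3] by (simp only: sumeq)
  then have "\<bar>sin y - y\<bar> * 6 \<le> y^3" using y0 by (simp add: eval_nat_numeral)
  then have "sin y \<ge> y - y^3/6" by (auto simp: abs_le_iff abs_if split: if_splits)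
  moreover have "y^3 \<le> y"
  proof -
    have "y*y \<le> 1" using y0 y1 by (simp add: mult_le_one)
    then have "y*(y*y) \<le> y" using y0 by (simp add: mult_left_le)
    then show ?thesis by (simp add: eval_nat_numeral)
  qed
  ultimately have sy: "sin y \<ge> 5/6 * y" by simp
  then have "(sin y)^2 \<ge> (5/6 * y)^2" using y0 by (intro power_mono) auto
  then have c2: "1 - cos (2*y) \<ge> 2 * (25/36) * y^2" unfolding cos_double_sin by (simp add: power_mult_distrib power_divide)
  have x2: "2*y = pi / (2 * real k)" unfolding y_def by simp
  define K where "K = real k ^ 2"
  have K: "K > 0" using k unfolding K_def by simp
  have "y^2 * K = (y * real k)^2" unfolding K_def by (simp add: power_mult_distrib)
  also have "\<dots> = pi^2/16" unfolding yk by (simp add: power_divide)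
  finally have "y^2 * K = pi^2/16" .
  then have y2: "y^2 = (pi^2/16) / K" using K by (simp add: field_simps)
  have "pi^2 \<ge> 2^2" using pi_ge_two by (intro power_mono) auto
  then have "(pi^2/16) / K \<ge> (1/4) / K" using K by (intro divide_right_mono) auto
  then have "1 - cos (2*y) \<ge> (25/72) / K" using c2 y2 by simp
  moreover have "(25/72) / K \<ge> 1 / (3 * K)" using K by (simp add: field_simps)
  ultimately show ?thesis using x2 unfolding K_def by simp
qed


lemma P_carrier: "P k \<in> carrier_mat k k" by (simp add: P_def U_def)

lemma eig_from_rows:
  assumes k: "k > 0" and f0: "f 0 \<noteq> 0" and rows: "\<And>i. i < k \<Longrightarrow> (\<Sum>j<k. Pe k i j * f j) = l * f i"
  shows "eigenvalue (P k) l"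
proof -
  let ?v = "vec k f"
  have "eigenvector (P k) ?v l"
    unfolding eigenvector_def
  proof (intro conjI)
    show "?v \<in> carrier_vec (dim_row (P k))" by (simp add: P_def U_def)
    have "?v $ 0 \<noteq> 0\<^sub>v (dim_row (P k)) $ 0" using k f0 by (simp add: P_def U_def)
    then show "?v \<noteq> 0\<^sub>v (dim_row (P k))" by metis
    show "P k *\<^sub>v ?v = l \<cdot>\<^sub>v ?v"
      by (rule eq_vecI) (auto simp: P_mult rows, simp_all add: P_def U_def)
  qed
  then show ?thesis unfolding eigenvalue_def by blast
qed

lemma char_poly_eq_prod:
  fixes A :: "real mat"
  assumes A: "A \<in> carrier_mat n n" and inj: "inj_on lam {1..n}"
    and ev: "\<And>i. i \<in> {1..n} \<Longrightarrow> eigenvalue A (lam i)"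
  shows "char_poly A = (\<Prod>i = 1..n. [:- lam i, 1:])"
proof (rule poly_eqI_degree_lead_coeff[of _ n _ "lam ` {1..n}"])
  have dm: "degree (char_poly A) = n \<and> coeff (char_poly A) n = 1" by (rule degree_monic_char_poly[OF A])
  have dq: "degree (\<Prod>i = 1..n. [:- lam i, 1:]) = n"
    by (subst degree_prod_eq_sum_degree) auto
  have lq: "lead_coeff (\<Prod>i = 1..n. [:- lam i, 1:]) = 1"
    by (simp add: lead_coeff_prod)
  show "coeff (char_poly A) n = coeff (\<Prod>i = 1..n. [:- lam i, 1:]) n" using dm dq lq by simp
  show "n \<le> card (lam ` {1..n})" using inj by (simp add: card_image)
  show "degree (char_poly A) \<le> n" using dm by simp
  show "degree (\<Prod>i = 1..n. [:- lam i, 1:]) \<le> n" using dq by simp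
  fix z assume "z \<in> lam ` {1..n}"
  then obtain i where i: "i \<in> {1..n}" "z = lam i" by auto
  have "poly (char_poly A) z = 0" using ev[OF i(1)] i(2) eigenvalue_root_char_poly[OF A] by simp
  moreover have "poly (\<Prod>i = 1..n. [:- lam i, 1:]) z = 0"
    using i by (auto simp: poly_prod prod_zero_iff intro!: bexI[of _ i])
  ultimately show "poly (char_poly A) z = poly (\<Prod>i = 1..n. [:- lam i, 1:]) z" by simp
qed

lemma ss_one2: "ss 1 j = 1 \<and> ss 1 (Suc j) = 1"
  by (induction j) auto

lemma ss_one: "ss 1 j = 1" using ss_one2 by blast

lemma rr_one: "rr k 1 = 0" by (simp add: rr_def ss_one)


definition goal_real :: "nat \<Rightarrow> bool" where
  "goal_real k \<longleftrightarrow> (\<exists>lam :: nat \<Rightarrow> real.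
       (\<forall>i j. 1 \<le> i \<longrightarrow> i \<le> j \<longrightarrow> j \<le> k \<longrightarrow> lam j \<le> lam i) \<and>
       char_poly (P k) = (\<Prod>i = 1..k. [:- lam i, 1:]) \<and>
       lam 1 = 1 \<and>
       max \<bar>lam k\<bar> \<bar>lam 2\<bar> \<le> 1 - 1 / (3 * real k ^ 2))"

lemma main_ge4:
  assumes k: "k \<ge> 4"
  shows "goal_real k"
proof -
  have "\<forall>m. \<exists>x. m + 1 < k \<longrightarrow> cos (th k (m+1)) < x \<and> x < cos (th k m) \<and> rr k x = 0"
    using root_exists[OF k] by blast
  then obtain \<rho> where \<rho>: "\<And>m. m + 1 < k \<Longrightarrow> cos (th k (m+1)) < \<rho> m \<and> \<rho> m < cos (th k m) \<and> rr k (\<rho> m) = 0"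
    by metis
  define lam where "lam i = (if i \<le> 1 then 1 else \<rho> (i - 2))" for i
  define C where "C = cos (th k 0)"
  have C: "C = cos (pi / (2 * real k))" unfolding C_def th_def by simp
  have C1: "C < 1" using cos_monotone_0_pi[of 0 "th k 0"] th_bounds[of 0 k] k unfolding C_def by simp
  have Cm: "cos (th k (k-1)) = - C"
  proof -
    have "th k (k-1) = pi - th k 0" using k unfolding th_def by (simp add: of_nat_diff field_simps)
    then show ?thesis unfolding C_def by simp
  qed
  have rho_bd: "- C < \<rho> m \<and> \<rho> m < C" if "m + 1 < k" for m
  proof -
    have "cos (th k (k-1)) \<le> cos (th k (m+1))"
    proof (cases "m + 1 = k - 1")
      case False
      then have "m + 1 < k - 1" using that by auto
      then show ?thesis using cos_th_mono[of "m+1" "k-1" k] k by auto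
    qed auto
    moreover have "cos (th k m) \<le> C"
      using cos_th_mono[of 0 m k] that unfolding C_def by (cases "m = 0") auto
    ultimately show ?thesis using \<rho>[OF that] Cm by auto
  qed
  have strict: "lam j < lam i" if "1 \<le> i" "i < j" "j \<le> k" for i j
  proof (cases "i = 1")
    case True
    then have "lam j = \<rho> (j-2)" "lam i = 1" using that unfolding lam_def by auto
    moreover have "j - 2 + 1 < k" using that True by auto
    ultimately show ?thesis using rho_bd[of "j-2"] C1 by auto
  next
    case False
    then have e: "lam j = \<rho> (j-2)" "lam i = \<rho> (i-2)" using that unfolding lam_def by auto
    have "\<rho> (j-2) < cos (th k (j-2))" using \<rho>[of "j-2"] that by auto
    also have "\<dots> \<le> cos (th k (i-1))"
    proof (cases "i - 1 = j - 2")
      case False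
      then have "i - 1 < j - 2" "j - 2 < k" using that \<open>i \<noteq> 1\<close> by auto
      then show ?thesis using cos_th_mono[of "i-1" "j-2" k] by auto
    qed simp
    also have "i - 2 + 1 = i - 1" using that False by auto
    then have "cos (th k (i-1)) < \<rho> (i-2)" using \<rho>[of "i-2"] that by auto
    finally show ?thesis using e by simp
  qed
  show ?thesis unfolding goal_real_def
  proof (intro exI[of _ lam] conjI allI impI)
    fix i j assume "1 \<le> i" "i \<le> j" "j \<le> k"
    then show "lam j \<le> lam i" using strict[of i j] by (cases "i = j") auto
  next
    have inj: "inj_on lam {1..k}"
    proof (rule inj_onI)
      fix i j assume "i \<in> {1..k}" "j \<in> {1..k}" "lam i = lam j"
      then show "i = j" using strict[of i j] strict[of j i] by (cases i j rule: linorder_cases) auto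
    qed
    show "char_poly (P k) = (\<Prod>i = 1..k. [:- lam i, 1:])"
    proof (rule char_poly_eq_prod[OF P_carrier inj])
      fix i assume i: "i \<in> {1..k}"
      show "eigenvalue (P k) (lam i)"
      proof (cases "i = 1")
        case True then show ?thesis using eig_rr[OF k rr_one] unfolding lam_def by simp
      next
        case False
        then have "lam i = \<rho> (i-2)" "i - 2 + 1 < k" using i unfolding lam_def by auto
        then show ?thesis using eig_rr[OF k] \<rho> by metis
      qed
    qed
  next
    show "lam 1 = 1" unfolding lam_def by simp
  next
    have "k - 2 + 1 < k" using k by auto
    then have "\<bar>lam k\<bar> < C" "\<bar>lam 2\<bar> < C" using rho_bd[of "k-2"] rho_bd[of 0] k unfolding lam_def by auto
    moreover have "C \<le> 1 - 1 / (3 * real k ^ 2)" unfolding C by (rule cos_bound) (use k in auto)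
    ultimately show "max \<bar>lam k\<bar> \<bar>lam 2\<bar> \<le> 1 - 1 / (3 * real k ^ 2)" by simp
  qed
qed


lemma sum3: "(\<Sum>j<(3::nat). g j) = g 0 + g 1 + (g 2 :: real)"
  by (simp add: eval_nat_numeral)

lemma eig3:
  assumes "f 0 \<noteq> 0" "\<And>i. i < 3 \<Longrightarrow> Pe 3 i 0 * f 0 + Pe 3 i 1 * f 1 + Pe 3 i 2 * f 2 = l * f i"
  shows "eigenvalue (P 3) l"
  by (rule eig_from_rows) (use assms in \<open>auto simp: sum3\<close>)

lemma less3: "(i::nat) < 3 \<longleftrightarrow> i = 0 \<or> i = 1 \<or> i = 2" by auto

lemma main3: "goal_real 3"
proof -
  define lam :: "nat \<Rightarrow> real" where "lam i = (if i \<le> 1 then 1 else if i = 2 then 1/3 else -1/3)" for i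
  have e1: "eigenvalue (P 3) 1"
    by (rule eig3[of "\<lambda>_. 1"]) (auto simp: less3 Pe_def U_entry_def)
  have e2: "eigenvalue (P 3) (1/3)"
    by (rule eig3[of "\<lambda>i. if i = 0 then 1 else if i = 1 then 0 else -1"]) (auto simp: less3 Pe_def U_entry_def)
  have e3: "eigenvalue (P 3) (-1/3)"
    by (rule eig3[of "\<lambda>i. if i = 1 then -1 else 1"]) (auto simp: less3 Pe_def U_entry_def)
  have inj: "inj_on lam {1..3}"
    by (rule inj_onI) (auto simp: lam_def split: if_splits)
  have cp: "char_poly (P 3) = (\<Prod>i = 1..3. [:- lam i, 1:])"
  proof (rule char_poly_eq_prod[OF P_carrier inj])
    fix i :: nat assume "i \<in> {1..3}"
    then have "i = 1 \<or> i = 2 \<or> i = 3" by auto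
    then show "eigenvalue (P 3) (lam i)" using e1 e2 e3 unfolding lam_def by auto
  qed
  show ?thesis unfolding goal_real_def
    by (intro exI[of _ lam] conjI cp) (auto simp: lam_def)
qed


theorem lemma5:
  fixes k :: nat
  assumes "k \<ge> 3"
  shows "(\<forall>z :: complex. eigenvalue (map_mat complex_of_real (P k)) z \<longrightarrow> z \<in> \<real>) \<and>
    (\<exists>lam :: nat \<Rightarrow> real.
       (\<forall>i j. 1 \<le> i \<longrightarrow> i \<le> j \<longrightarrow> j \<le> k \<longrightarrow> lam j \<le> lam i) \<and>
       char_poly (P k) = (\<Prod>i = 1..k. [:- lam i, 1:]) \<and>
       lam 1 = 1 \<and>
       max \<bar>lam k\<bar> \<bar>lam 2\<bar> \<le> 1 - 1 / (3 * real k ^ 2))"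
proof -
  have g: "goal_real k"
  proof (cases "k = 3")
    case True then show ?thesis using main3 by simp
  next
    case False then show ?thesis using assms by (intro main_ge4) auto
  qed
  then obtain lam :: "nat \<Rightarrow> real" where cp: "char_poly (P k) = (\<Prod>i = 1..k. [:- lam i, 1:])"
    unfolding goal_real_def by blast
  have "z \<in> \<real>" if ev: "eigenvalue (map_mat complex_of_real (P k)) z" for z
  proof -
    interpret mp: map_poly_comm_ring_hom "complex_of_real" ..
    have C: "map_mat complex_of_real (P k) \<in> carrier_mat k k" by (simp add: P_carrier[of k, simplified carrier_mat_def] P_def U_def)
    have "poly (char_poly (map_mat complex_of_real (P k))) z = 0"
      using ev eigenvalue_root_char_poly[OF C] by simp
    also have "char_poly (map_mat complex_of_real (P k)) = map_poly complex_of_real (char_poly (P k))"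
      by (rule of_real_hom.char_poly_hom[OF P_carrier])
    also have "\<dots> = (\<Prod>i = 1..k. map_poly complex_of_real [:- lam i, 1:])"
      unfolding cp by (rule mp.hom_prod)
    finally have "(\<Prod>i = 1..k. poly (map_poly complex_of_real [:- lam i, 1:]) z) = 0"
      by (simp add: poly_prod)
    then obtain i where "poly (map_poly complex_of_real [:- lam i, 1:]) z = 0"
      by (auto simp: prod_zero_iff)
    then have "z = complex_of_real (lam i)" by simp
    then show ?thesis by simp
  qed
  with g show ?thesis unfolding goal_real_def by blast
qed

end
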